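(* Let $k\geq 0$ be an integer. If $F$ is a forest on $n$ vertices, then $\alpha_k(F)\geq \Big\lceil\frac{k+1}{k+2}\,n\Big\rceil$.
   Context: All graphs are finite and simple. For a graph $G$, a $k$-sparse set is a set of vertices inducing a subgraph of maximum degree at most $k$, and $\alpha_k(G)$ denotes the maximum size of a $k$-sparse set in $G$. A forest is a graph with no cycles. *)

theory Defs
  imports Main "HOL-Library.Multiset" Complex_Main
begin

definition simple_graph :: "'a set \<Rightarrow> ('a \<Rightarrow> 'a \<Rightarrow> bool) \<Rightarrow> bool" where
  "simple_graph V E \<longleftrightarrow> finite V \<and> (\<forall>u v. E u v \<longrightarrow> u \<in> V \<and> v \<in> V)
     \<and> (\<forall>u v. E u v \<longrightarrow> E v u) \<and> (\<forall>v. \<not> E v v)"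

definition is_cycle :: "'a set \<Rightarrow> ('a \<Rightarrow> 'a \<Rightarrow> bool) \<Rightarrow> 'a list \<Rightarrow> bool" where
  "is_cycle V E cs \<longleftrightarrow> length cs \<ge> 3 \<and> distinct cs \<and> set cs \<subseteq> V
     \<and> (\<forall>i. Suc i < length cs \<longrightarrow> E (cs ! i) (cs ! Suc i))
     \<and> E (last cs) (hd cs)"

definition forest :: "'a set \<Rightarrow> ('a \<Rightarrow> 'a \<Rightarrow> bool) \<Rightarrow> bool" where
  "forest V E \<longleftrightarrow> simple_graph V E \<and> \<not> (\<exists>cs. is_cycle V E cs)"

definition k_sparse :: "'a set \<Rightarrow> ('a \<Rightarrow> 'a \<Rightarrow> bool) \<Rightarrow> nat \<Rightarrow> 'a set \<Rightarrow> bool" where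
  "k_sparse V E k S \<longleftrightarrow> S \<subseteq> V \<and> (\<forall>v\<in>S. card {u\<in>S. E v u} \<le> k)"

definition alpha_k :: "'a set \<Rightarrow> ('a \<Rightarrow> 'a \<Rightarrow> bool) \<Rightarrow> nat \<Rightarrow> nat" where
  "alpha_k V E k = Max {card S | S. k_sparse V E k S}"

end

theory Submission
  imports Defs
begin

lemma main_aux:
  fixes E :: "'a \<Rightarrow> 'a \<Rightarrow> bool" and k :: nat
  assumes fin: "finite W"
    and H: "\<forall>W'\<subseteq>W. W' \<noteq> {} \<longrightarrow> (\<exists>u\<in>W'. card {x\<in>W'. E u x} \<le> 1)"
    and sym: "\<forall>x y. E x y \<longrightarrow> E y x" and irr: "\<forall>x. \<not> E x x"
  shows "\<exists>S\<subseteq>W. (\<forall>v\<in>S. a v + card {x\<in>S. E v x} \<le> k)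
           \<and> (k+2) * card (W - S) \<le> card W + sum a W"
  using fin H
proof (induction "card W" arbitrary: W a rule: less_induct)
  case less
  show ?case
  proof (cases "W = {}")
    case True
    then show ?thesis by auto
  next
    case False
    then obtain u where uW: "u \<in> W" and du: "card {x\<in>W. E u x} \<le> 1"
      using less.prems(2) by blast
    define W' where "W' = W - {u}"
    have finW': "finite W'" using less.prems(1) W'_def by auto
    have HW': "\<forall>W''\<subseteq>W'. W'' \<noteq> {} \<longrightarrow> (\<exists>u\<in>W''. card {x\<in>W''. E u x} \<le> 1)"
    proof (intro allI impI)
      fix W'' assume "W'' \<subseteq> W'" "W'' \<noteq> {}"
      moreover have "W'' \<subseteq> W" using \<open>W'' \<subseteq> W'\<close> W'_def by blast
      ultimately show "\<exists>u\<in>W''. card {x\<in>W''. E u x} \<le> 1" using less.prems(2) by blast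
    qed
    have cardW: "card W = Suc (card W')"
      using card_Suc_Diff1[OF less.prems(1) uW] W'_def by simp
    have lt: "card W' < card W" using cardW by simp
    have sumW: "sum f W = f u + sum f W'" for f :: "'a \<Rightarrow> nat"
      using sum.remove[OF less.prems(1) uW] W'_def by simp
    have uW': "u \<notin> W'" using W'_def by auto
    show ?thesis
    proof (cases "a u \<ge> k+1")
      case True
      obtain S' where S': "S' \<subseteq> W'" "\<forall>v\<in>S'. a v + card {x\<in>S'. E v x} \<le> k"
        "(k+2) * card (W' - S') \<le> card W' + sum a W'"
        using less.hyps[OF lt finW' HW'] by blast
      have "W - S' = insert u (W' - S')" using W'_def S'(1) uW by auto
      then have "card (W - S') = Suc (card (W' - S'))"
        using finW' uW' by simp
      then have "(k+2) * card (W - S') \<le> card W + sum a W"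
        using S'(3) cardW sumW[of a] True by simp
      moreover have "S' \<subseteq> W" using S'(1) W'_def by auto
      ultimately show ?thesis using S'(2) by blast
    next
      case False
      hence au: "a u \<le> k" by simp
      show ?thesis
      proof (cases "{x\<in>W. E u x} = {}")
        case True
        obtain S' where S': "S' \<subseteq> W'" "\<forall>v\<in>S'. a v + card {x\<in>S'. E v x} \<le> k"
          "(k+2) * card (W' - S') \<le> card W' + sum a W'"
          using less.hyps[OF lt finW' HW'] by blast
        define S where "S = insert u S'"
        have "W - S = W' - S'" using S_def W'_def by auto
        hence cnt: "(k+2) * card (W - S) \<le> card W + sum a W"
          using S'(3) cardW sumW[of a] by simp
        have SW: "S \<subseteq> W" using S_def S'(1) W'_def uW by auto
        have "\<forall>v\<in>S. a v + card {x\<in>S. E v x} \<le> k"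
        proof
          fix v assume v: "v \<in> S"
          show "a v + card {x\<in>S. E v x} \<le> k"
          proof (cases "v = u")
            case True
            have "{x\<in>S. E v x} = {}" using True \<open>{x\<in>W. E u x} = {}\<close> SW by auto
            hence "card {x\<in>S. E v x} = 0" by (simp only: card.empty)
            then show ?thesis using au True by simp
          next
            case False
            hence vS': "v \<in> S'" using v S_def by auto
            have "{x\<in>S. E v x} = {x\<in>S'. E v x}"
              using S_def \<open>{x\<in>W. E u x} = {}\<close> sym vS' S'(1) W'_def by auto
            then show ?thesis using S'(2) vS' by simp
          qed
        qed
        then show ?thesis using SW cnt by blast
      next
        case False
        then obtain p where p: "p \<in> W" "E u p" by auto
        have Nu: "{x\<in>W. E u x} = {p}"
        proof -
          have fin: "finite {x\<in>W. E u x}" using less.prems(1) by simp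
          have "p \<in> {x\<in>W. E u x}" using p by simp
          moreover have "\<forall>y\<in>{x\<in>W. E u x}. \<forall>z\<in>{x\<in>W. E u x}. y = z"
            using card_le_Suc0_iff_eq[OF fin] du by simp
          ultimately show ?thesis by blast
        qed
        have pu: "p \<noteq> u" using p irr by auto
        have pW': "p \<in> W'" using pu p W'_def by auto
        define a' where "a' = a(p := a p + 1 + a u)"
        obtain S' where S': "S' \<subseteq> W'" "\<forall>v\<in>S'. a' v + card {x\<in>S'. E v x} \<le> k"
          "(k+2) * card (W' - S') \<le> card W' + sum a' W'"
          using less.hyps[OF lt finW' HW'] by blast
        have suma': "sum a' W' = sum a W' + 1 + a u"
        proof -
          have "sum a' W' = a' p + sum a' (W' - {p})" by (rule sum.remove[OF finW' pW'])
          also have "sum a' (W' - {p}) = sum a (W' - {p})" using a'_def by (intro sum.cong) auto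
          also have "sum a W' = a p + sum a (W' - {p})" by (rule sum.remove[OF finW' pW'])
          ultimately show ?thesis using a'_def by simp
        qed
        define S where "S = insert u S'"
        have "W - S = W' - S'" using S_def W'_def by auto
        hence cnt: "(k+2) * card (W - S) \<le> card W + sum a W"
          using S'(3) cardW sumW[of a] suma' by simp
        have SW: "S \<subseteq> W" using S_def S'(1) W'_def uW by auto
        have uS': "u \<notin> S'" using S'(1) uW' by auto
        have other: "{x\<in>S. E v x} = {x\<in>S'. E v x}" if "v \<in> S'" "v \<noteq> p" for v
          using that S_def Nu sym S'(1) W'_def by auto
        have "\<forall>v\<in>S. a v + card {x\<in>S. E v x} \<le> k"
        proof
          fix v assume v: "v \<in> S"
          show "a v + card {x\<in>S. E v x} \<le> k"
          proof (cases "v = u")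
            case True
            show ?thesis
            proof (cases "p \<in> S'")
              case True
              have "{x\<in>S. E u x} = {p}" using Nu True S_def SW by auto
              moreover have "a' p + card {x\<in>S'. E p x} \<le> k" using S'(2) True by blast
              ultimately show ?thesis using \<open>v = u\<close> a'_def pu by simp
            next
              case False
              have "{x\<in>S. E u x} = {}" using Nu False S_def SW pu by auto
              hence "card {x\<in>S. E u x} = 0" by (simp only: card.empty)
              then show ?thesis using au True by simp
            qed
          next
            case False
            hence vS': "v \<in> S'" using v S_def by auto
            show ?thesis
            proof (cases "v = p")
              case True
              have "{x\<in>S. E p x} = insert u {x\<in>S'. E p x}" using S_def p sym by auto
              hence "card {x\<in>S. E p x} \<le> Suc (card {x\<in>S'. E p x})"
                using finite_subset[OF S'(1) finW'] by (simp add: card_insert_if)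
              moreover have "a' p + card {x\<in>S'. E p x} \<le> k" using S'(2) vS' True by blast
              ultimately show ?thesis using True a'_def by simp
            next
              case False
              have "a' v + card {x\<in>S'. E v x} \<le> k" using S'(2) vS' by blast
              then show ?thesis using other[OF vS' False] False a'_def by simp
            qed
          qed
        qed
        then show ?thesis using SW cnt by blast
      qed
    qed
  qed
qed


definition gpath :: "('a \<Rightarrow> 'a \<Rightarrow> bool) \<Rightarrow> 'a set \<Rightarrow> 'a list \<Rightarrow> bool" where
  "gpath E W xs \<longleftrightarrow> distinct xs \<and> set xs \<subseteq> W \<and> (\<forall>i. Suc i < length xs \<longrightarrow> E (xs!i) (xs!Suc i))"

lemma forest_low_deg:
  assumes F: "forest V E" and sub: "W \<subseteq> V" and ne: "W \<noteq> {}"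
  shows "\<exists>u\<in>W. card {x\<in>W. E u x} \<le> 1"
proof (rule ccontr)
  assume nc: "\<not> ?thesis"
  have sg: "simple_graph V E" and nocyc: "\<not> (\<exists>cs. is_cycle V E cs)" using F unfolding forest_def by auto
  have finV: "finite V" using sg unfolding simple_graph_def by auto
  have finW: "finite W" using finV sub finite_subset by auto
  have sym: "\<And>x y. E x y \<Longrightarrow> E y x" and irr: "\<And>x. \<not> E x x" using sg unfolding simple_graph_def by auto
  define L where "L = {length xs | xs. gpath E W xs}"
  have Lb: "L \<subseteq> {..card W}"
  proof
    fix n assume "n \<in> L"
    then obtain xs where "gpath E W xs" "n = length xs" using L_def by auto
    then have "card (set xs) \<le> card W" "card (set xs) = length xs"
      using card_mono[OF finW] distinct_card by (auto simp: gpath_def)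
    then show "n \<in> {..card W}" using \<open>n = length xs\<close> by simp
  qed
  have finL: "finite L" using Lb finite_subset by blast
  obtain w where w: "w \<in> W" using ne by auto
  have "gpath E W [w]" using w by (auto simp: gpath_def)
  hence "length [w] \<in> L" unfolding L_def by blast
  hence "Max L \<in> L" using finL Max_in by blast
  then obtain P where P: "gpath E W P" "length P = Max L" using L_def by auto
  have maxP: "length xs \<le> length P" if "gpath E W xs" for xs
  proof -
    have "length xs \<in> L" unfolding L_def using that by blast
    then show ?thesis using Max_ge[OF finL] P(2) by simp
  qed
  have "length [w] \<le> length P" by (rule maxP[OF \<open>gpath E W [w]\<close>])
  hence Pne: "P \<noteq> []" by auto
  define p0 where "p0 = hd P"
  have p0: "P ! 0 = p0" using Pne p0_def hd_conv_nth by metis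
  have p0W: "p0 \<in> W" using P(1) Pne p0_def by (auto simp: gpath_def)
  have Nsub: "{x\<in>W. E p0 x} \<subseteq> set P"
  proof
    fix x assume x: "x \<in> {x\<in>W. E p0 x}"
    show "x \<in> set P"
    proof (rule ccontr)
      assume "x \<notin> set P"
      have "gpath E W (x # P)" unfolding gpath_def
      proof (intro conjI allI impI)
        show "distinct (x # P)" using \<open>x \<notin> set P\<close> P(1) by (auto simp: gpath_def)
        show "set (x # P) \<subseteq> W" using x P(1) by (auto simp: gpath_def)
        fix i assume i: "Suc i < length (x # P)"
        show "E ((x # P) ! i) ((x # P) ! Suc i)"
        proof (cases i)
          case 0 then show ?thesis using x p0 sym by auto
        next
          case (Suc j) then show ?thesis using i P(1) by (auto simp: gpath_def)
        qed
      qed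
      then have "length (x # P) \<le> length P" by (rule maxP)
      then show False by simp
    qed
  qed
  have "\<not> card {x\<in>W. E p0 x} \<le> 1" using nc p0W by auto
  hence "\<not> (\<forall>y\<in>{x\<in>W. E p0 x}. \<forall>z\<in>{x\<in>W. E p0 x}. y = z)"
    using card_le_Suc0_iff_eq[of "{x\<in>W. E p0 x}"] finW by auto
  then obtain y z where yz: "y \<in> {x\<in>W. E p0 x}" "z \<in> {x\<in>W. E p0 x}" "y \<noteq> z" by blast
  obtain i where i: "i < length P" "P ! i = y" using yz(1) Nsub by (metis in_set_conv_nth subsetD)
  obtain j where j: "j < length P" "P ! j = z" using yz(2) Nsub by (metis in_set_conv_nth subsetD)
  have i0: "i \<noteq> 0"
  proof
    assume "i = 0"
    then have "E p0 p0" using i p0 yz(1) by simp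
    then show False using irr by blast
  qed
  have j0: "j \<noteq> 0"
  proof
    assume "j = 0"
    then have "E p0 p0" using j p0 yz(2) by simp
    then show False using irr by blast
  qed
  have "i \<noteq> j" using i j yz(3) by auto
  have "\<exists>m. m < length P \<and> 2 \<le> m \<and> E p0 (P ! m)"
  proof (cases "i = 1")
    case True
    then have "2 \<le> j" using j0 \<open>i \<noteq> j\<close> by simp
    then show ?thesis using j yz(2) by auto
  next
    case False
    then have "2 \<le> i" using i0 by simp
    then show ?thesis using i yz(1) by auto
  qed
  then obtain m where m: "m < length P" "2 \<le> m" "E p0 (P ! m)" by blast
  define cs where "cs = take (Suc m) P"
  have "is_cycle V E cs" unfolding is_cycle_def
  proof (intro conjI allI impI)
    show "3 \<le> length cs" using cs_def m by auto
    show "distinct cs" using cs_def P(1) by (auto simp: gpath_def)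
    have "set cs \<subseteq> set P" unfolding cs_def by (rule set_take_subset)
    then show "set cs \<subseteq> V" using P(1) sub unfolding gpath_def by blast
    fix k assume "Suc k < length cs"
    then show "E (cs ! k) (cs ! Suc k)" using cs_def P(1) by (auto simp: gpath_def)
  next
    have "last cs = P ! m" using cs_def m by (simp add: take_Suc_conv_app_nth)
    moreover have "hd cs = p0" using cs_def p0_def Pne by simp
    ultimately show "E (last cs) (hd cs)" using m sym by simp
  qed
  then show False using nocyc by blast
qed

theorem lemma3p2:
  fixes V :: "'a set" and E :: "'a \<Rightarrow> 'a \<Rightarrow> bool" and k :: nat
  assumes "forest V E"
  shows "\<lceil>(real k + 1) / (real k + 2) * real (card V)\<rceil> \<le> int (alpha_k V E k)"
proof -
  have sg: "simple_graph V E" using assms unfolding forest_def by auto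
  have finV: "finite V" using sg unfolding simple_graph_def by auto
  have sym: "\<forall>x y. E x y \<longrightarrow> E y x" and irr: "\<forall>x. \<not> E x x" using sg unfolding simple_graph_def by auto
  have H: "\<forall>W'\<subseteq>V. W' \<noteq> {} \<longrightarrow> (\<exists>u\<in>W'. card {x\<in>W'. E u x} \<le> 1)"
    using forest_low_deg[OF assms] by blast
  obtain S where S: "S \<subseteq> V" "\<forall>v\<in>S. (\<lambda>_. 0::nat) v + card {x\<in>S. E v x} \<le> k"
    "(k+2) * card (V - S) \<le> card V + sum (\<lambda>_. 0::nat) V"
    using main_aux[OF finV H sym irr, of "\<lambda>_. 0" k] by blast
  have ks: "k_sparse V E k S" using S unfolding k_sparse_def by auto
  have fin: "finite {card S | S. k_sparse V E k S}"
  proof -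
    have "{card S | S. k_sparse V E k S} \<subseteq> card ` Pow V" unfolding k_sparse_def by auto
    then show ?thesis using finV finite_subset by blast
  qed
  have "card S \<le> alpha_k V E k" unfolding alpha_k_def using fin ks Max_ge by blast
  moreover have cd: "card (V - S) = card V - card S" using S(1) finV by (simp add: card_Diff_subset finite_subset)
  have "card S \<le> card V" using S(1) finV card_mono by blast
  hence "(k+1) * card V \<le> (k+2) * card S" using S(3) cd
    by (simp add: algebra_simps diff_mult_distrib2)
  hence "real ((k+1) * card V) \<le> real ((k+2) * card S)" by linarith
  hence "(real k + 1) * real (card V) \<le> (real k + 2) * real (card S)" by (simp add: algebra_simps)
  hence "(real k + 1) / (real k + 2) * real (card V) \<le> real (card S)"
    by (simp add: field_simps)
  ultimately have "(real k + 1) / (real k + 2) * real (card V) \<le> real_of_int (int (alpha_k V E k))"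
    by simp
  then show ?thesis by (rule ceiling_le)
qed

end
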